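(* Let $V_1,V_2$ be closed subspaces of a Hilbert space $\mathcal H$, neither of which contains the other, with $\angle(V_1,V_2)>0$. For $w\in\mathcal H$ let $w_0=P_{V_1\cap V_2}(w)$, $w_1=P_{V_1}(w)$, and let $d_i(w)$ be the distance from $w$ to $V_i$ ($i=1,2$). Then $\|w_1-w_0\|\le\dfrac{\cos\angle(V_1,V_2)\,d_1(w)+d_2(w)}{\sin\angle(V_1,V_2)}$.
   Context: $P_V$ denotes orthogonal projection onto a closed subspace $V$. For closed subspaces $V_1,V_2$ neither of which contains the other, the (Friederichs) angle $\angle(V_1,V_2)\in[0,\pi/2]$ is defined by $\cos\angle(V_1,V_2)=\sup\{|\langle v_1,v_2\rangle| : v_i\in V_i,\ \|v_i\|=1,\ v_i\perp V_1\cap V_2\}$. *)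

theory Defs
  imports "HOL-Analysis.Analysis"
begin

definition orth_proj :: "'a::real_inner set \<Rightarrow> 'a \<Rightarrow> 'a" where
  "orth_proj V w = (THE p. p \<in> V \<and> (\<forall>v\<in>V. inner (w - p) v = 0))"

definition friedrichs_cos :: "'a::real_inner set \<Rightarrow> 'a set \<Rightarrow> real" where
  "friedrichs_cos V1 V2 = Sup {\<bar>inner v1 v2\<bar> | v1 v2.
      v1 \<in> V1 \<and> v2 \<in> V2 \<and> norm v1 = 1 \<and> norm v2 = 1 \<and>
      (\<forall>u\<in>V1 \<inter> V2. inner v1 u = 0) \<and> (\<forall>u\<in>V1 \<inter> V2. inner v2 u = 0)}"

definition friedrichs_angle :: "'a::real_inner set \<Rightarrow> 'a set \<Rightarrow> real" where
  "friedrichs_angle V1 V2 = arccos (friedrichs_cos V1 V2)"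

end

theory Submission imports Defs begin

lemma parallelogram:
  fixes a b w :: "'a::real_inner"
  shows "norm (a - b)^2 = 2*norm (w-a)^2 + 2*norm (w-b)^2 - norm (2 *\<^sub>R w - (a + b))^2"
  unfolding power2_norm_eq_inner
  by (simp add: inner_diff_left inner_diff_right inner_add_left inner_add_right inner_commute)

lemma norm_diff_scale:
  fixes a v :: "'a::real_inner"
  shows "norm (a - t *\<^sub>R v)^2 = norm a ^2 - 2*t*inner a v + t^2 * (norm v)^2"
  unfolding power2_norm_eq_inner
  by (simp add: inner_diff_left inner_diff_right inner_commute power2_eq_square algebra_simps)

lemma proj_exists:
  fixes V :: "'a::{real_inner, complete_space} set"
  assumes "subspace V" "closed V"
  shows "\<exists>p. p \<in> V \<and> (\<forall>v\<in>V. inner (w - p) v = 0)"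
proof -
  define \<delta> where "\<delta> = infdist w V"
  have V0: "0 \<in> V" using assms(1) subspace_0 by blast
  hence Vne: "V \<noteq> {}" by auto
  have d0: "\<delta> \<ge> 0" unfolding \<delta>_def by (rule infdist_nonneg)
  define e :: "nat \<Rightarrow> real" where "e n = 1 / (real n + 1)" for n
  have epos: "e n > 0" for n unfolding e_def by simp
  have "\<exists>y. y \<in> V \<and> dist w y < \<delta> + e n" for n
  proof -
    have "(INF a\<in>V. dist w a) < \<delta> + e n" using infdist_notempty[OF Vne] epos[of n] \<delta>_def by simp
    then show ?thesis using Vne by (subst (asm) cINF_less_iff) auto
  qed
  then obtain y where yV: "\<And>n. y n \<in> V" and yd: "\<And>n. dist w (y n) < \<delta> + e n" by metis
  have dle: "\<delta> \<le> dist w z" if "z \<in> V" for z unfolding \<delta>_def using infdist_le[OF that] .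
  have par: "norm (y n - y m)^2 \<le> 4*\<delta>*(e n + e m) + 2*(e n)^2 + 2*(e m)^2" for n m
  proof -
    have mid: "(1/2) *\<^sub>R (y n + y m) \<in> V"
      using assms(1) yV by (simp add: subspace_add subspace_scale)
    have "2*\<delta> \<le> 2 * dist w ((1/2) *\<^sub>R (y n + y m))" using dle[OF mid] by simp
    also have "\<dots> = norm (2 *\<^sub>R w - (y n + y m))"
    proof -
      have "2 *\<^sub>R w - (y n + y m) = 2 *\<^sub>R (w - (1/2) *\<^sub>R (y n + y m))" by (simp add: algebra_simps)
      thus ?thesis by (simp add: dist_norm)
    qed
    finally have A: "2*\<delta> \<le> norm (2 *\<^sub>R w - (y n + y m))" .
    have pl: "norm (y n - y m)^2 = 2*norm (w - y n)^2 + 2*norm (w - y m)^2 - norm (2 *\<^sub>R w - (y n + y m))^2"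
      by (rule parallelogram)
    have B: "(2*\<delta>)^2 \<le> norm (2 *\<^sub>R w - (y n + y m))^2" using A d0 by (intro power_mono) auto
    have C: "norm (w - y n)^2 \<le> (\<delta> + e n)^2" using yd[of n] by (intro power_mono) (auto simp: dist_norm)
    have D: "norm (w - y m)^2 \<le> (\<delta> + e m)^2" using yd[of m] by (intro power_mono) (auto simp: dist_norm)
    show ?thesis using pl B C D by (simp add: power2_eq_square algebra_simps)
  qed
  have "Cauchy y"
  proof (rule metric_CauchyI)
    fix \<epsilon> :: real assume ep: "\<epsilon> > 0"
    obtain N :: nat where N: "1 / (real N + 1) < min 1 (\<epsilon>^2 / (8*\<delta>+4))"
    proof -
      have "min 1 (\<epsilon>^2 / (8*\<delta>+4)) > 0" using ep d0 by simp
      then obtain N where "inverse (real (Suc N)) < min 1 (\<epsilon>^2 / (8*\<delta>+4))" using reals_Archimedean by blast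
      thus ?thesis using that[of N] by (simp add: field_simps)
    qed
    have eN: "e N < 1" "e N < \<epsilon>^2 / (8*\<delta>+4)" using N unfolding e_def by auto
    show "\<exists>M. \<forall>m\<ge>M. \<forall>n\<ge>M. dist (y m) (y n) < \<epsilon>"
    proof (intro exI allI impI)
      fix m n assume mn: "N \<le> m" "N \<le> n"
      have em: "e m \<le> e N" "e n \<le> e N" using mn unfolding e_def by (auto simp: field_simps)
      have "norm (y m - y n)^2 \<le> 4*\<delta>*(e m + e n) + 2*(e m)^2 + 2*(e n)^2" by (rule par)
      also have "\<dots> \<le> 4*\<delta>*(2 * e N) + 4*(e N)"
      proof -
        have sq: "(e k)^2 \<le> e N" if "e k \<le> e N" for k
        proof -
          have "e k * e k \<le> 1 * e k" using epos[of k] that eN(1) by (intro mult_right_mono) auto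
          thus ?thesis using that by (simp add: power2_eq_square)
        qed
        have "(e m)^2 \<le> e N" using sq em by blast
        moreover have "(e n)^2 \<le> e N" using sq em by blast
        moreover have "4*\<delta>*(e m + e n) \<le> 4*\<delta>*(2 * e N)" using em d0 by (intro mult_left_mono) auto
        ultimately show ?thesis by linarith
      qed
      also have "\<dots> = (8*\<delta>+4) * e N" by (simp add: algebra_simps)
      also have "\<dots> < \<epsilon>^2" using eN(2) d0 by (simp add: field_simps)
      finally have "norm (y m - y n)^2 < \<epsilon>^2" .
      thus "dist (y m) (y n) < \<epsilon>" using ep by (simp add: dist_norm power_less_imp_less_base)
    qed
  qed
  then obtain p where lim: "y \<longlonglongrightarrow> p" using Cauchy_convergent_iff convergent_def by blast
  have pV: "p \<in> V" using assms(2) yV lim closed_sequentially by blast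
  have "dist w p \<le> \<delta>"
  proof (rule LIMSEQ_le)
    show "(\<lambda>n. dist w (y n)) \<longlonglongrightarrow> dist w p" by (intro tendsto_intros lim)
    have "e \<longlonglongrightarrow> 0" unfolding e_def using LIMSEQ_inverse_real_of_nat by (simp add: inverse_eq_divide add.commute)
    thus "(\<lambda>n. \<delta> + e n) \<longlonglongrightarrow> \<delta>" using tendsto_add[of "\<lambda>_. \<delta>" \<delta> sequentially e 0] by simp
    show "\<exists>N. \<forall>n\<ge>N. dist w (y n) \<le> \<delta> + e n" using yd less_imp_le by blast
  qed
  hence minp: "norm (w - p) \<le> norm (w - z)" if "z \<in> V" for z using dle[OF that] by (simp add: dist_norm)
  have "inner (w - p) v = 0" if vV: "v \<in> V" for v
  proof (cases "v = 0")
    case False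
    define a where "a = w - p"
    define t where "t = inner a v / (norm v)^2"
    have "p + t *\<^sub>R v \<in> V" using assms(1) pV vV by (simp add: subspace_add subspace_scale)
    hence "norm a ^2 \<le> norm (a - t *\<^sub>R v)^2" using minp[of "p + t *\<^sub>R v"] unfolding a_def
      by (intro power_mono) (auto simp: algebra_simps)
    also have "norm (a - t *\<^sub>R v)^2 = norm a ^2 - 2*t*inner a v + t^2 * (norm v)^2"
      by (rule norm_diff_scale)
    also have "\<dots> = norm a ^2 - (inner a v)^2 / (norm v)^2" using False unfolding t_def by (simp add: field_simps power2_eq_square)
    finally have "(inner a v)^2 / (norm v)^2 \<le> 0" by simp
    hence "(inner a v)^2 \<le> 0" using False by (simp add: divide_le_0_iff)
    thus ?thesis unfolding a_def by simp
  qed simp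
  with pV show ?thesis by blast
qed

lemma orth_proj:
  fixes V :: "'a::{real_inner, complete_space} set"
  assumes "subspace V" "closed V"
  shows "orth_proj V w \<in> V" "\<And>v. v \<in> V \<Longrightarrow> inner (w - orth_proj V w) v = 0"
proof -
  have "\<exists>!p. p \<in> V \<and> (\<forall>v\<in>V. inner (w - p) v = 0)"
  proof (rule ex_ex1I)
    show "\<exists>p. p \<in> V \<and> (\<forall>v\<in>V. inner (w - p) v = 0)" by (rule proj_exists[OF assms])
  next
    fix p p' assume p: "p \<in> V \<and> (\<forall>v\<in>V. inner (w - p) v = 0)" and p': "p' \<in> V \<and> (\<forall>v\<in>V. inner (w - p') v = 0)"
    have dV: "p' - p \<in> V" using p p' assms(1) by (simp add: subspace_diff)
    have "inner (w - p) (p' - p) = 0" "inner (w - p') (p' - p) = 0" using p p' dV by auto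
    hence "inner (p' - p) (p' - p) = 0" by (simp add: inner_diff_left inner_diff_right)
    thus "p = p'" by simp
  qed
  hence "orth_proj V w \<in> V \<and> (\<forall>v\<in>V. inner (w - orth_proj V w) v = 0)"
    unfolding orth_proj_def by (rule theI')
  thus "orth_proj V w \<in> V" "\<And>v. v \<in> V \<Longrightarrow> inner (w - orth_proj V w) v = 0" by auto
qed

lemma orth_proj_dist:
  fixes V :: "'a::{real_inner, complete_space} set"
  assumes "subspace V" "closed V"
  shows "norm (w - orth_proj V w) \<le> infdist w V"
proof -
  have V0: "0 \<in> V" using assms(1) subspace_0 by blast
  hence Vne: "V \<noteq> {}" by auto
  have "norm (w - orth_proj V w) \<le> dist w y" if y: "y \<in> V" for y
  proof -
    let ?p = "orth_proj V w"
    have "?p - y \<in> V" using orth_proj(1)[OF assms] y assms(1) by (simp add: subspace_diff)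
    hence o: "inner (w - ?p) (?p - y) = 0" by (rule orth_proj(2)[OF assms])
    have "norm (w - y)^2 = norm (w - ?p)^2 + norm (?p - y)^2"
    proof -
      have "norm ((w - ?p) + (?p - y))^2 = norm (w - ?p)^2 + norm (?p - y)^2" using o
        by (intro norm_add_Pythagorean) (simp add: orthogonal_def)
      thus ?thesis by simp
    qed
    hence "norm (w - ?p)^2 \<le> norm (w - y)^2" by simp
    thus ?thesis by (simp add: dist_norm power2_le_iff_abs_le)
  qed
  thus ?thesis unfolding infdist_notempty[OF Vne] using Vne by (intro cINF_greatest) auto
qed

theorem lemma3p25:
  fixes V1 V2 :: "'a::{real_inner, complete_space} set" and w :: 'a
  assumes "subspace V1" "closed V1" "subspace V2" "closed V2"
    and "\<not> V1 \<subseteq> V2" "\<not> V2 \<subseteq> V1"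
    and "friedrichs_angle V1 V2 > 0"
  shows "norm (orth_proj V1 w - orth_proj (V1 \<inter> V2) w)
    \<le> (cos (friedrichs_angle V1 V2) * infdist w V1 + infdist w V2)
       / sin (friedrichs_angle V1 V2)"
proof -
  let ?M = "V1 \<inter> V2"
  have sM: "subspace ?M" using assms(1,3) by (rule subspace_inter)
  have cM: "closed ?M" using assms(2,4) by (rule closed_Int)
  define S where "S = {\<bar>inner v1 v2\<bar> | v1 v2.
      v1 \<in> V1 \<and> v2 \<in> V2 \<and> norm v1 = 1 \<and> norm v2 = 1 \<and>
      (\<forall>u\<in>V1 \<inter> V2. inner v1 u = 0) \<and> (\<forall>u\<in>V1 \<inter> V2. inner v2 u = 0)}"
  define c where "c = friedrichs_cos V1 V2"
  have cS: "c = Sup S" unfolding c_def S_def friedrichs_cos_def by simp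
  have Sle: "x \<le> 1" if "x \<in> S" for x
  proof -
    from that obtain v1 v2 :: 'a where "x = \<bar>inner v1 v2\<bar>" "norm v1 = 1" "norm v2 = 1" unfolding S_def by (auto simp only: mem_Collect_eq)
    thus ?thesis using Cauchy_Schwarz_ineq2[of v1 v2] by simp
  qed
  have bdd: "bdd_above S" using Sle by (intro bdd_aboveI[of _ 1]) auto
  have perp: "\<exists>a. a \<in> A \<and> a \<noteq> 0 \<and> (\<forall>m\<in>?M. inner a m = 0)"
    if A: "subspace A" "?M \<subseteq> A" "\<not> A \<subseteq> ?M" for A
  proof -
    obtain a0 where a0: "a0 \<in> A" "a0 \<notin> ?M" using A(3) by blast
    define a where "a = a0 - orth_proj ?M a0"
    have "orth_proj ?M a0 \<in> ?M" by (rule orth_proj(1)[OF sM cM])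
    hence aA: "a \<in> A" unfolding a_def using A(1,2) a0(1) by (auto intro: subspace_diff)
    have "a \<noteq> 0" unfolding a_def using a0(2) \<open>orth_proj ?M a0 \<in> ?M\<close> by auto
    moreover have "\<forall>m\<in>?M. inner a m = 0" unfolding a_def using orth_proj(2)[OF sM cM] by blast
    ultimately show ?thesis using aA by blast
  qed
  obtain a where a: "a \<in> V1" "a \<noteq> 0" "\<forall>m\<in>?M. inner a m = 0"
    using perp[of V1] assms(1,5) by blast
  obtain b where b: "b \<in> V2" "b \<noteq> 0" "\<forall>m\<in>?M. inner b m = 0"
    using perp[of V2] assms(3,6) by blast
  have elem: "\<bar>inner (a /\<^sub>R norm a) (b /\<^sub>R norm b)\<bar> \<in> S"
    unfolding S_def using a b assms(1,3)
    by (intro CollectI exI[of _ "a /\<^sub>R norm a"] exI[of _ "b /\<^sub>R norm b"])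
       (auto simp: subspace_scale)
  hence Sne: "S \<noteq> {}" by auto
  have c0: "0 \<le> c" unfolding cS using cSup_upper[OF elem bdd] by linarith
  have c1: "c \<le> 1" unfolding cS by (rule cSup_least[OF Sne Sle])
  have cb: "\<bar>inner x y\<bar> \<le> c * norm x * norm y"
    if xy: "x \<in> V1" "y \<in> V2" "\<forall>m\<in>?M. inner x m = 0" "\<forall>m\<in>?M. inner y m = 0" for x y
  proof (cases "x = 0 \<or> y = 0")
    case True thus ?thesis using c0 by auto
  next
    case False
    have "\<bar>inner (x /\<^sub>R norm x) (y /\<^sub>R norm y)\<bar> \<in> S"
      unfolding S_def using xy False assms(1,3)
      by (intro CollectI exI[of _ "x /\<^sub>R norm x"] exI[of _ "y /\<^sub>R norm y"])
         (auto simp: subspace_scale)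
    hence "\<bar>inner (x /\<^sub>R norm x) (y /\<^sub>R norm y)\<bar> \<le> c" unfolding cS using bdd by (rule cSup_upper)
    hence "\<bar>inner x y\<bar> / (norm x * norm y) \<le> c" using False by (simp add: abs_mult divide_inverse ac_simps)
    thus ?thesis using False by (simp add: pos_divide_le_eq mult.assoc)
  qed
  have cl1: "c < 1"
  proof (rule ccontr)
    assume "\<not> c < 1" hence "c = 1" using c1 by simp
    thus False using assms(7) unfolding friedrichs_angle_def c_def[symmetric] by simp
  qed
  define s where "s = sqrt (1 - c^2)"
  have spos: "s > 0" unfolding s_def using c0 cl1 by (simp add: power_less_one_iff abs_square_less_1)
  have cosA: "cos (friedrichs_angle V1 V2) = c" unfolding friedrichs_angle_def c_def[symmetric] using c0 c1 by simp
  have sinA: "sin (friedrichs_angle V1 V2) = s" unfolding friedrichs_angle_def c_def[symmetric] s_def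
    using c0 c1 by (simp add: sin_arccos_abs)
  define w1 where "w1 = orth_proj V1 w"
  define w0 where "w0 = orth_proj ?M w"
  define u where "u = w1 - w0"
  define p where "p = orth_proj V2 u"
  define q where "q = u - p"
  define d1 where "d1 = infdist w V1"
  define d2 where "d2 = infdist w V2"
  have w1V: "w1 \<in> V1" unfolding w1_def by (rule orth_proj(1)[OF assms(1,2)])
  have w0M: "w0 \<in> ?M" unfolding w0_def by (rule orth_proj(1)[OF sM cM])
  have uV: "u \<in> V1" unfolding u_def using w1V w0M assms(1) by (auto intro: subspace_diff)
  have uM: "\<forall>m\<in>?M. inner u m = 0"
  proof
    fix m assume m: "m \<in> ?M"
    have "inner u m = inner (w - w0) m - inner (w - w1) m" unfolding u_def by (simp add: inner_diff_left)
    also have "\<dots> = 0" using orth_proj(2)[OF sM cM m, of w] orth_proj(2)[OF assms(1,2), of m w] m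
      unfolding w0_def w1_def by simp
    finally show "inner u m = 0" .
  qed
  have pV: "p \<in> V2" unfolding p_def by (rule orth_proj(1)[OF assms(3,4)])
  have qperp: "\<And>v. v \<in> V2 \<Longrightarrow> inner q v = 0" unfolding q_def p_def by (rule orth_proj(2)[OF assms(3,4)])
  have pM: "\<forall>m\<in>?M. inner p m = 0"
  proof
    fix m assume m: "m \<in> ?M"
    have "inner p m = inner u m - inner q m" unfolding q_def by (simp add: inner_diff_left)
    thus "inner p m = 0" using uM qperp m by auto
  qed
  have qp: "inner q p = 0" using qperp pV by blast
  have up: "u = p + q" unfolding q_def by simp
  have hup: "inner u p = (norm p)^2" unfolding up by (simp add: inner_add_left qp power2_norm_eq_inner)
  have huq: "inner u q = (norm q)^2" unfolding up by (simp add: inner_add_left qp inner_commute[of p q] power2_norm_eq_inner)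
  have U2: "(norm u)^2 = (norm p)^2 + (norm q)^2" unfolding up
    by (rule norm_add_Pythagorean) (simp add: orthogonal_def qp inner_commute[of p q])
  have Pc: "norm p \<le> c * norm u"
  proof (cases "p = 0")
    case True thus ?thesis using c0 by simp
  next
    case False
    have "(norm p)^2 \<le> c * norm u * norm p" using hup cb[OF uV pV uM pM] by linarith
    hence "norm p * norm p \<le> (c * norm u) * norm p" by (simp add: power2_eq_square)
    thus ?thesis using False by simp
  qed
  show ?thesis
  proof (cases "u = 0")
    case True
    have "0 \<le> (c * d1 + d2) / s" using c0 spos unfolding d1_def d2_def by (simp add: infdist_nonneg)
    thus ?thesis using True unfolding cosA sinA d1_def d2_def u_def w1_def w0_def by simp
  next
    case False
    define U where "U = norm u"
    define P where "P = norm p"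
    define Q where "Q = norm q"
    have Upos: "U > 0" using False unfolding U_def by simp
    have P0: "P \<ge> 0" unfolding P_def by simp
    have Q0: "Q \<ge> 0" unfolding Q_def by simp
    have PcU: "P \<le> c * U" using Pc unfolding P_def U_def .
    have U2': "U^2 = P^2 + Q^2" using U2 unfolding U_def P_def Q_def .
    have sQ: "s * U \<le> Q"
    proof -
      have "(c*U)^2 \<ge> P^2" using PcU P0 by (intro power_mono) auto
      have "c^2 \<le> 1" using c0 c1 by (simp add: power_le_one)
      hence s2: "s^2 = 1 - c^2" unfolding s_def by simp
      have "(s * U)^2 = U^2 - (c*U)^2" by (simp only: power_mult_distrib s2 left_diff_distrib mult_1)
      hence "(s * U)^2 \<le> Q^2" using U2' \<open>(c*U)^2 \<ge> P^2\<close> by linarith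
      thus ?thesis using Q0 by (rule power2_le_imp_le)
    qed
    have "s * U > 0" using spos Upos by simp
    hence Qpos: "Q > 0" using sQ by linarith
    have D1: "norm (w - w1) \<le> d1" unfolding w1_def d1_def by (rule orth_proj_dist[OF assms(1,2)])
    have wq: "inner w q \<le> d2 * Q"
    proof -
      have V2ne: "V2 \<noteq> {}" using assms(3) subspace_0 by blast
      have "inner w q / Q \<le> dist w y" if y: "y \<in> V2" for y
      proof -
        have "inner w q = inner (w - y) q" using qperp[OF y] by (simp add: inner_diff_left inner_commute[of y q])
        also have "\<dots> \<le> norm (w - y) * Q" unfolding Q_def using Cauchy_Schwarz_ineq2[of "w - y" q] by linarith
        finally show ?thesis using Qpos by (simp add: pos_divide_le_eq dist_norm)
      qed
      hence "inner w q / Q \<le> d2" unfolding d2_def infdist_notempty[OF V2ne] using V2ne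
        by (intro cINF_greatest) auto
      thus ?thesis using Qpos by (simp add: pos_divide_le_eq)
    qed
    have w0q: "inner w0 q = 0" using qperp[of w0] w0M by (simp add: inner_commute)
    have wu: "inner (w - w1) u = 0" unfolding w1_def by (rule orth_proj(2)[OF assms(1,2) uV])
    have wdec: "inner w q = inner (w - w1) q + Q^2"
    proof -
      have "inner w q = inner ((w - w1) + u + w0) q" unfolding u_def by simp
      also have "\<dots> = inner (w - w1) q + inner u q + inner w0 q" by (simp only: inner_add_left)
      finally show ?thesis using huq w0q unfolding Q_def by simp
    qed
    define t where "t = Q^2 / U^2"
    have nqt: "norm (q - t *\<^sub>R u)^2 = Q^2 * P^2 / U^2"
    proof -
      have "norm (q - t *\<^sub>R u)^2 = Q^2 - 2*t*inner q u + t^2 * U^2"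
        unfolding Q_def U_def by (rule norm_diff_scale)
      also have "inner q u = Q^2" using huq unfolding Q_def by (simp add: inner_commute)
      finally have e1: "norm (q - t *\<^sub>R u)^2 = Q^2 - 2*t*Q^2 + t^2 * U^2" .
      have tU: "t * U^2 = Q^2" unfolding t_def using Upos by simp
      have "t^2 * U^2 = t * Q^2" using tU by (simp add: power2_eq_square mult.assoc)
      hence "norm (q - t *\<^sub>R u)^2 = Q^2 - t * Q^2" using e1 by simp
      also have "\<dots> = Q^2 * (U^2 - Q^2) / U^2" unfolding t_def using Upos by (simp add: field_simps)
      also have "\<dots> = Q^2 * P^2 / U^2" using U2' by simp
      finally show ?thesis .
    qed
    have nqt2: "norm (q - t *\<^sub>R u) \<le> c * Q"
    proof -
      have "P^2 \<le> (c*U)^2" using PcU P0 by (intro power_mono) auto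
      hence "Q^2 * P^2 \<le> Q^2 * (c*U)^2" by (intro mult_left_mono) auto
      hence "Q^2 * P^2 / U^2 \<le> Q^2 * (c*U)^2 / U^2" using Upos by (intro divide_right_mono) auto
      also have "\<dots> = (c * Q)^2" using Upos by (simp add: power_mult_distrib)
      finally have "Q^2 * P^2 / U^2 \<le> (c * Q)^2" .
      hence "norm (q - t *\<^sub>R u)^2 \<le> (c*Q)^2" using nqt by simp
      thus ?thesis by (rule power2_le_imp_le) (simp add: c0 Q0)
    qed
    have i1: "inner (w - w1) q = inner (w - w1) (q - t *\<^sub>R u)" using wu by (simp add: inner_diff_right)
    have i2: "\<bar>inner (w - w1) (q - t *\<^sub>R u)\<bar> \<le> norm (w - w1) * norm (q - t *\<^sub>R u)"
      by (rule Cauchy_Schwarz_ineq2)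
    have i3: "norm (w - w1) * norm (q - t *\<^sub>R u) \<le> d1 * (c * Q)"
      by (rule mult_mono[OF D1 nqt2]) (simp_all add: d1_def infdist_nonneg c0 Q0)
    have "inner (w - w1) q \<ge> - (d1 * (c * Q))" using i1 i2 i3 by linarith
    hence h1: "Q^2 - d1 * (c * Q) \<le> d2 * Q" using wq wdec by linarith
    have h2: "(Q - c * d1) * Q = Q^2 - d1 * (c * Q)" by (simp add: power2_eq_square algebra_simps)
    have "(Q - c * d1) * Q \<le> d2 * Q" using h1 h2 by linarith
    hence "Q - c * d1 \<le> d2" using Qpos by (rule mult_right_le_imp_le)
    hence "s * U \<le> c * d1 + d2" using sQ by linarith
    hence "U \<le> (c * d1 + d2) / s" using spos by (simp add: pos_le_divide_eq mult.commute)
    thus ?thesis unfolding cosA sinA d1_def d2_def U_def u_def w1_def w0_def .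
  qed
qed

end
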